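(* Let $(A,B,\mathfrak H)$ be a P-module. If $\xi\in\mathfrak H$ is contained in an eventually periodic ray $p$ that is not periodic, then $\xi\in\mathfrak H_{\mathrm{res}}$.
   Context: A P-module is $(A,B,\mathfrak H)$ with $\mathfrak H$ a finite-dimensional complex Hilbert space and $A,B$ operators with $A^*A+B^*B=\mathrm{id}$. A sub-module is a subspace invariant under $A,B$; irreducible means no sub-modules besides $\{0\}$ and itself. $\mathfrak H$ decomposes orthogonally as $\mathfrak H=\mathfrak H_{\mathrm{comp}}\oplus\mathfrak H_{\mathrm{res}}$, where the complete sub-module $\mathfrak H_{\mathrm{comp}}$ is a direct sum of irreducible sub-modules and the residual subspace $\mathfrak H_{\mathrm{res}}$ contains no non-zero sub-module. A ray is an infinite binary sequence $p=x_1x_2\cdots$, $p_n=x_1\cdots x_n$; for a word $w=x_1\cdots x_n$, $w\xi:=X_{x_n}\cdots X_{x_1}\xi$ with $X_0=A,X_1=B$. A non-zero $\xi$ is contained in $p$ if $\|p_n\xi\|=\|\xi\|$ for all $n$. $p$ is eventually periodic if $p=v\cdot w^\infty$ for finite words $v,w$, and periodic if $p=w^\infty$. *)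

theory Defs
  imports "HOL-Analysis.Analysis"
begin

text \<open>The Hilbert space is modelled as complex^'n (any finite-dimensional
complex Hilbert space is isometric to one of these), operators as matrices.\<close>

type_synonym 'n cvec = "complex ^ 'n"
type_synonym 'n cop = "complex ^ 'n ^ 'n"

definition cinner :: "'n::finite cvec \<Rightarrow> 'n cvec \<Rightarrow> complex" where
  "cinner x y = (\<Sum>i\<in>UNIV. cnj (x $ i) * y $ i)"

definition adj :: "'n::finite cop \<Rightarrow> 'n cop" where
  "adj M = (\<chi> i j. cnj (M $ j $ i))"

definition P_module :: "'n::finite cop \<Rightarrow> 'n cop \<Rightarrow> bool" where
  "P_module A B \<longleftrightarrow> adj A ** A + adj B ** B = mat 1"

definition csubspace :: "'n::finite cvec set \<Rightarrow> bool" where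
  "csubspace S \<longleftrightarrow> 0 \<in> S \<and> (\<forall>x\<in>S. \<forall>y\<in>S. x + y \<in> S) \<and> (\<forall>c. \<forall>x\<in>S. c *s x \<in> S)"

definition submodule :: "'n::finite cop \<Rightarrow> 'n cop \<Rightarrow> 'n cvec set \<Rightarrow> bool" where
  "submodule A B S \<longleftrightarrow> csubspace S \<and> (\<forall>x\<in>S. A *v x \<in> S \<and> B *v x \<in> S)"

definition irreducible_submodule :: "'n::finite cop \<Rightarrow> 'n cop \<Rightarrow> 'n cvec set \<Rightarrow> bool" where
  "irreducible_submodule A B S \<longleftrightarrow> submodule A B S \<and> S \<noteq> {0} \<and>
     (\<forall>T. submodule A B T \<and> T \<subseteq> S \<longrightarrow> T = {0} \<or> T = S)"

definition Hcomp :: "'n::finite cop \<Rightarrow> 'n cop \<Rightarrow> 'n cvec set" where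
  "Hcomp A B = \<Inter>{T. csubspace T \<and> \<Union>{S. irreducible_submodule A B S} \<subseteq> T}"

definition Hres :: "'n::finite cop \<Rightarrow> 'n cop \<Rightarrow> 'n cvec set" where
  "Hres A B = {x. \<forall>y\<in>Hcomp A B. cinner y x = 0}"

text \<open>Letters: False = 0 (operator A), True = 1 (operator B).
  A word x1...xn acts as X_{xn} ... X_{x1}.\<close>
definition word_act :: "'n::finite cop \<Rightarrow> 'n cop \<Rightarrow> bool list \<Rightarrow> 'n cvec \<Rightarrow> 'n cvec" where
  "word_act A B w \<xi> = fold (\<lambda>b v. (if b then B else A) *v v) w \<xi>"

text \<open>A ray is an infinite binary sequence p = x1 x2 ..., stored 0-indexed: p i = x_{i+1}.\<close>
definition prefix_ray :: "(nat \<Rightarrow> bool) \<Rightarrow> nat \<Rightarrow> bool list" where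
  "prefix_ray p n = map p [0..<n]"

definition contained_in :: "'n::finite cop \<Rightarrow> 'n cop \<Rightarrow> 'n cvec \<Rightarrow> (nat \<Rightarrow> bool) \<Rightarrow> bool" where
  "contained_in A B \<xi> p \<longleftrightarrow> \<xi> \<noteq> 0 \<and> (\<forall>n. norm (word_act A B (prefix_ray p n) \<xi>) = norm \<xi>)"

text \<open>The ray v w w w ... (w nonempty).\<close>
definition ray_of :: "bool list \<Rightarrow> bool list \<Rightarrow> nat \<Rightarrow> bool" where
  "ray_of v w i = (if i < length v then v ! i else w ! ((i - length v) mod length w))"

definition eventually_periodic :: "(nat \<Rightarrow> bool) \<Rightarrow> bool" where
  "eventually_periodic p \<longleftrightarrow> (\<exists>v w. w \<noteq> [] \<and> p = ray_of v w)"

definition periodic :: "(nat \<Rightarrow> bool) \<Rightarrow> bool" where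
  "periodic p \<longleftrightarrow> (\<exists>w. w \<noteq> [] \<and> p = ray_of [] w)"

end

theory Submission
  imports Defs
begin

lemma cinner_add_left: "cinner (x + y) z = cinner x z + cinner y z"
  by (simp add: cinner_def sum.distrib algebra_simps)
lemma cinner_add_right: "cinner z (x + y) = cinner z x + cinner z y"
  by (simp add: cinner_def sum.distrib algebra_simps)
lemma cinner_zero_left[simp]: "cinner 0 z = 0"
  by (simp add: cinner_def)
lemma cinner_zero_right[simp]: "cinner z 0 = 0"
  by (simp add: cinner_def)
lemma cinner_scale_left: "cinner (c *s x) z = cnj c * cinner x z"
  by (simp add: cinner_def sum_distrib_left algebra_simps)
lemma scaleR_vec_eq: "(r::real) *\<^sub>R (x::complex^'n) = complex_of_real r *s x"
  apply (subst vec_eq_iff, rule allI)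
  apply (simp only: vector_scaleR_component vector_smult_component)
  apply (simp add: scaleR_conv_of_real)
  done
lemma cinner_scaleR_left: "cinner (r *\<^sub>R x) z = of_real r * cinner x z"
  by (simp add: scaleR_vec_eq cinner_scale_left)
lemma cinner_scaleR_right: "cinner z (r *\<^sub>R x) = of_real r * cinner z x"
  by (simp add: scaleR_vec_eq cinner_def sum_distrib_left algebra_simps)
lemma mv_scale: "(M::'n::finite cop) *v (c *s x) = c *s (M *v x)"
  by (simp add: vec_eq_iff matrix_vector_mult_def sum_distrib_left algebra_simps)

lemma cinner_adj: "cinner ((M::'n::finite cop) *v x) y = cinner x (adj M *v y)"
proof -
  have "cinner (M *v x) y = (\<Sum>i\<in>UNIV. \<Sum>j\<in>UNIV. cnj (M $ i $ j) * cnj (x $ j) * y $ i)"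
    unfolding cinner_def matrix_vector_mult_def by (simp add: cnj_sum sum_distrib_right)
  also have "\<dots> = (\<Sum>j\<in>UNIV. \<Sum>i\<in>UNIV. cnj (M $ i $ j) * cnj (x $ j) * y $ i)"
    by (rule sum.swap)
  also have "\<dots> = cinner x (adj M *v y)"
    unfolding cinner_def adj_def matrix_vector_mult_def by (simp add: sum_distrib_left mult_ac)
  finally show ?thesis .
qed

lemma cinner_self: "cinner x x = complex_of_real (norm x ^ 2)"
proof -
  have "norm x ^ 2 = (\<Sum>i\<in>UNIV. norm (x $ i) ^ 2)"
    by (simp add: norm_vec_def L2_set_def sum_nonneg)
  moreover have "cinner x x = (\<Sum>i\<in>UNIV. complex_of_real (norm (x $ i) ^ 2))"
    unfolding cinner_def
  proof (intro sum.cong refl)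
    fix i
    show "cnj (x $ i) * x $ i = complex_of_real (norm (x $ i) ^ 2)"
      using complex_norm_square[of "x $ i"] by (simp add: mult.commute)
  qed
  ultimately show ?thesis by simp
qed

lemma pm_inner:
  assumes "P_module A B"
  shows "cinner x y = cinner (A *v x) (A *v y) + cinner (B *v x) (B *v y)"
proof -
  have "cinner (A *v x) (A *v y) + cinner (B *v x) (B *v y)
      = cinner x ((adj A ** A) *v y) + cinner x ((adj B ** B) *v y)"
    by (simp add: cinner_adj matrix_vector_mul_assoc)
  also have "\<dots> = cinner x ((adj A ** A + adj B ** B) *v y)"
    by (simp add: matrix_vector_mult_add_rdistrib cinner_add_right)
  also have "\<dots> = cinner x y" using assms by (simp add: P_module_def)
  finally show ?thesis by simp
qed

lemma pm_norm:
  assumes "P_module A B"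
  shows "norm (A *v x) ^ 2 + norm (B *v x) ^ 2 = norm x ^ 2"
proof -
  have "complex_of_real (norm x ^ 2) = complex_of_real (norm (A *v x) ^ 2 + norm (B *v x) ^ 2)"
    using pm_inner[OF assms, of x x] by (simp add: cinner_self)
  then show ?thesis by (simp only: of_real_eq_iff)
qed

lemma word_act_Nil[simp]: "word_act A B [] x = x"
  by (simp add: word_act_def)
lemma word_act_Cons[simp]: "word_act A B (b # u) x = word_act A B u ((if b then B else A) *v x)"
  by (simp add: word_act_def)
lemma word_act_append: "word_act A B (u @ v) x = word_act A B v (word_act A B u x)"
  by (simp add: word_act_def)

lemma word_act_mat: "\<exists>M. \<forall>x. word_act A B u x = M *v x"
proof (induction u)
  case Nil
  show ?case by (rule exI[of _ "mat 1"]) simp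
next
  case (Cons b u)
  then obtain M where M: "\<And>x. word_act A B u x = M *v x" by blast
  show ?case
    by (rule exI[of _ "M ** (if b then B else A)"]) (simp add: M matrix_vector_mul_assoc)
qed

lemma word_act_add: "word_act A B u (x + y) = word_act A B u x + word_act A B u y"
  using word_act_mat[of A B u] by (auto simp: matrix_vector_right_distrib)
lemma word_act_scale: "word_act A B u (c *s x) = c *s word_act A B u x"
  using word_act_mat[of A B u] by (auto simp: mv_scale)
lemma word_act_scaleR: "word_act A B u (c *\<^sub>R x) = c *\<^sub>R word_act A B u x"
  by (simp add: scaleR_vec_eq word_act_scale)
lemma word_act_zero[simp]: "word_act A B u 0 = 0"
  using word_act_mat[of A B u] by auto
lemma word_act_cont: "continuous_on S (word_act A B u)"
proof -
  obtain M where M: "\<And>x. word_act A B u x = M *v x" using word_act_mat by blast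
  have "word_act A B u = (\<lambda>x. M *v x)" using M by auto
  moreover have "bounded_linear (\<lambda>x. M *v x)"
    using matrix_vector_mul_linear linear_conv_bounded_linear by blast
  ultimately show ?thesis using linear_continuous_on by metis
qed

lemma prefix_ray_Suc': "prefix_ray q (Suc n) = q 0 # prefix_ray (\<lambda>i. q (Suc i)) n"
proof -
  have "[0..<Suc n] = 0 # map Suc [0..<n]"
    by (simp only: upt_conv_Cons[OF zero_less_Suc] map_Suc_upt)
  then show ?thesis by (simp add: prefix_ray_def)
qed

lemma pm_contr:
  assumes "P_module A B" shows "norm ((if b then B else A) *v x) \<le> norm x"
proof -
  have e: "norm (A *v x) ^ 2 + norm (B *v x) ^ 2 = norm x ^ 2" using pm_norm[OF assms] .
  have p: "0 \<le> norm (A *v x) ^ 2" "0 \<le> norm (B *v x) ^ 2" by simp_all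
  have "norm ((if b then B else A) *v x) ^ 2 \<le> norm x ^ 2"
    using e p by (cases b) (simp only: if_True if_False; linarith)+
  then show ?thesis by (rule power2_le_imp_le) simp
qed

lemma pm_kill:
  assumes "P_module A B" "norm ((if b then B else A) *v x) = norm x"
  shows "(if b then A else B) *v x = 0"
proof -
  have e: "norm (A *v x) ^ 2 + norm (B *v x) ^ 2 = norm x ^ 2" using pm_norm[OF assms(1)] .
  show ?thesis
  proof (cases b)
    case True
    then have "norm (A *v x) ^ 2 = 0" using e assms(2) by simp
    then show ?thesis using True by simp
  next
    case False
    then have "norm (B *v x) ^ 2 = 0" using e assms(2) by simp
    then show ?thesis using False by simp
  qed
qed

lemma pm_step_inner:
  assumes "P_module A B" "(if b then A else B) *v x = 0"
  shows "cinner y x = cinner ((if b then B else A) *v y) ((if b then B else A) *v x)"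
  using pm_inner[OF assms(1), of y x] assms(2) by (cases b) simp_all

lemma word_act_contr:
  assumes "P_module A B" shows "norm (word_act A B u x) \<le> norm x"
proof (induction u arbitrary: x)
  case Nil then show ?case by simp
next
  case (Cons b u)
  show ?case using Cons.IH[of "(if b then B else A) *v x"] pm_contr[OF assms, of b x] by simp
qed

definition follows :: "'n::finite cop \<Rightarrow> 'n cop \<Rightarrow> (nat \<Rightarrow> bool) \<Rightarrow> 'n cvec \<Rightarrow> bool" where
  "follows A B q x \<longleftrightarrow> (\<forall>n. norm (word_act A B (prefix_ray q n) x) = norm x)"

lemma follows_Cons:
  assumes "P_module A B" "follows A B q x"
  shows "norm ((if q 0 then B else A) *v x) = norm x"
    "(if q 0 then A else B) *v x = 0"
    "follows A B (\<lambda>i. q (Suc i)) ((if q 0 then B else A) *v x)"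
proof -
  have n: "norm (word_act A B (prefix_ray q n) x) = norm x" for n
    using assms(2) by (simp add: follows_def)
  show 1: "norm ((if q 0 then B else A) *v x) = norm x"
    using n[of 1] by (simp add: prefix_ray_def)
  show "(if q 0 then A else B) *v x = 0" using pm_kill[OF assms(1) 1] .
  show "follows A B (\<lambda>i. q (Suc i)) ((if q 0 then B else A) *v x)"
    unfolding follows_def
  proof
    fix m
    show "norm (word_act A B (prefix_ray (\<lambda>i. q (Suc i)) m) ((if q 0 then B else A) *v x)) =
        norm ((if q 0 then B else A) *v x)"
      using n[of "Suc m"] 1 by (simp only: prefix_ray_Suc' word_act_Cons)
  qed
qed

lemma follows_shift:
  assumes "P_module A B"
  shows "follows A B q x \<Longrightarrow> follows A B (\<lambda>i. q (i + n)) (word_act A B (prefix_ray q n) x)"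
proof (induction n arbitrary: q x)
  case 0 then show ?case by (simp add: prefix_ray_def)
next
  case (Suc n)
  have "follows A B (\<lambda>i. q (Suc (i + n))) (word_act A B (prefix_ray (\<lambda>i. q (Suc i)) n) ((if q 0 then B else A) *v x))"
    using Suc.IH[OF follows_Cons(3)[OF assms Suc.prems]] by simp
  then show ?case by (simp add: prefix_ray_Suc')
qed

lemma follows_inner:
  assumes "P_module A B"
  shows "follows A B q x \<Longrightarrow> cinner y x = cinner (word_act A B (prefix_ray q n) y) (word_act A B (prefix_ray q n) x)"
proof (induction n arbitrary: q x y)
  case 0 then show ?case by (simp add: prefix_ray_def)
next
  case (Suc n)
  have "cinner y x = cinner ((if q 0 then B else A) *v y) ((if q 0 then B else A) *v x)"
    using pm_step_inner[OF assms follows_Cons(2)[OF assms Suc.prems]] .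
  also have "\<dots> = cinner (word_act A B (prefix_ray (\<lambda>i. q (Suc i)) n) ((if q 0 then B else A) *v y))
     (word_act A B (prefix_ray (\<lambda>i. q (Suc i)) n) ((if q 0 then B else A) *v x))"
    using Suc.IH[OF follows_Cons(3)[OF assms Suc.prems]] .
  finally show ?case by (simp add: prefix_ray_Suc')
qed

lemma orth_diff:
  assumes "P_module A B" "(if b then A else B) *v x = 0" "(if b then B else A) *v z = 0"
  shows "cinner x z = 0"
proof -
  have e: "cinner x z = cinner (A *v x) (A *v z) + cinner (B *v x) (B *v z)" using pm_inner[OF assms(1)] .
  show ?thesis
  proof (cases b)
    case True
    then have "A *v x = 0" "B *v z = 0" using assms(2,3) by simp_all
    then show ?thesis using e by simp
  next
    case False
    then have "B *v x = 0" "A *v z = 0" using assms(2,3) by simp_all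
    then show ?thesis using e by simp
  qed
qed


lemma follows_orth_n:
  assumes "P_module A B"
  shows "q n \<noteq> q' n \<Longrightarrow> follows A B q x \<Longrightarrow> follows A B q' z \<Longrightarrow> cinner x z = 0"
proof (induction n arbitrary: q q' x z)
  case 0
  have kx: "(if q 0 then A else B) *v x = 0" and kz: "(if q' 0 then A else B) *v z = 0"
    using follows_Cons(2)[OF assms 0(2)] follows_Cons(2)[OF assms 0(3)] by blast+
  have "q' 0 = (\<not> q 0)" using 0(1) by auto
  then have kz': "(if q 0 then B else A) *v z = 0" using kz by (cases "q 0") simp_all
  show ?case by (rule orth_diff[OF assms kx kz'])
next
  case (Suc n)
  show ?case
  proof (cases "q 0 = q' 0")
    case False
    have kx: "(if q 0 then A else B) *v x = 0" and kz: "(if q' 0 then A else B) *v z = 0"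
      using follows_Cons(2)[OF assms Suc(3)] follows_Cons(2)[OF assms Suc(4)] by blast+
    have "q' 0 = (\<not> q 0)" using False by auto
    then have kz': "(if q 0 then B else A) *v z = 0" using kz by (cases "q 0") simp_all
    show ?thesis by (rule orth_diff[OF assms kx kz'])
  next
    case True
    have "cinner x z = cinner ((if q' 0 then B else A) *v x) ((if q' 0 then B else A) *v z)"
      using pm_step_inner[OF assms follows_Cons(2)[OF assms Suc(4)]] .
    also have "\<dots> = 0"
    proof -
      have f1: "follows A B (\<lambda>i. q (Suc i)) ((if q' 0 then B else A) *v x)"
        using follows_Cons(3)[OF assms Suc(3)] True by simp
      have f2: "follows A B (\<lambda>i. q' (Suc i)) ((if q' 0 then B else A) *v z)"
        using follows_Cons(3)[OF assms Suc(4)] .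
      have d: "(\<lambda>i. q (Suc i)) n \<noteq> (\<lambda>i. q' (Suc i)) n" using Suc(2) by simp
      show ?thesis by (rule Suc.IH[OF d f1 f2])
    qed
    finally show ?thesis .
  qed
qed

lemma follows_orth:
  assumes "P_module A B" "q \<noteq> q'" "follows A B q x" "follows A B q' z"
  shows "cinner x z = 0"
proof -
  have "\<exists>n. q n \<noteq> q' n"
  proof (rule ccontr)
    assume "\<not> (\<exists>n. q n \<noteq> q' n)"
    then have "\<forall>n. q n = q' n" by blast
    then have "q = q'" by (intro ext) blast
    then show False using assms(2) by blast
  qed
  then obtain n where n: "q n \<noteq> q' n" by blast
  show ?thesis by (rule follows_orth_n[OF assms(1) n assms(3,4)])
qed

lemma follows_word:
  assumes "P_module A B"
  shows "follows A B q y \<Longrightarrow> word_act A B u y = 0 \<or> follows A B (\<lambda>i. q (i + length u)) (word_act A B u y)"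
proof (induction u arbitrary: q y)
  case Nil then show ?case by simp
next
  case (Cons b u)
  show ?case
  proof (cases "b = q 0")
    case True
    have "word_act A B u ((if q 0 then B else A) *v y) = 0 \<or>
      follows A B (\<lambda>i. q (Suc (i + length u))) (word_act A B u ((if q 0 then B else A) *v y))"
      using Cons.IH[OF follows_Cons(3)[OF assms Cons.prems]] by simp
    then show ?thesis using True by simp
  next
    case False
    then have "(if b then B else A) = (if q 0 then A else B)" by (cases b; cases "q 0") simp_all
    then have "(if b then B else A) *v y = 0"
      using follows_Cons(2)[OF assms Cons.prems] by simp
    then show ?thesis by simp
  qed
qed

lemma follows_scaleR:
  "follows A B q x \<Longrightarrow> follows A B q (c *\<^sub>R x)"
  by (simp add: follows_def word_act_scaleR)

lemma submodule_word:
  "submodule A B S \<Longrightarrow> y \<in> S \<Longrightarrow> word_act A B u y \<in> S"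
proof (induction u arbitrary: y)
  case Nil then show ?case by simp
next
  case (Cons b u) then show ?case by (simp add: submodule_def)
qed

lemma csubspace_subspace: "csubspace S \<Longrightarrow> subspace S"
  by (simp add: csubspace_def subspace_def scaleR_vec_eq)


lemma prefix_ray_Suc: "prefix_ray q (Suc n) = prefix_ray q n @ [q n]"
  by (simp add: prefix_ray_def)

lemma prefix_ray_add: "prefix_ray q (m + n) = prefix_ray q m @ prefix_ray (\<lambda>i. q (i + m)) n"
proof (induction n)
  case 0 then show ?case by (simp add: prefix_ray_def)
next
  case (Suc n)
  have "prefix_ray q (m + Suc n) = prefix_ray q (m + n) @ [q (m + n)]"
    using prefix_ray_Suc[of q "m + n"] by simp
  also have "\<dots> = prefix_ray q m @ prefix_ray (\<lambda>i. q (i + m)) (Suc n)"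
    using Suc.IH by (simp add: prefix_ray_Suc add.commute)
  finally show ?case .
qed

lemma ray_rotate: "w \<noteq> [] \<Longrightarrow> (\<lambda>i. ray_of [] w (i + k)) = ray_of [] (rotate k w)"
proof (rule ext)
  fix i assume w: "w \<noteq> []"
  have "rotate k w ! (i mod length w) = w ! ((k + i mod length w) mod length w)"
    using w by (simp add: nth_rotate)
  also have "(k + i mod length w) mod length w = (i + k) mod length w"
    by (simp add: mod_add_right_eq add.commute)
  finally show "ray_of [] w (i + k) = ray_of [] (rotate k w) i"
    by (simp add: ray_of_def)
qed

lemma ray_period: "(\<lambda>i. ray_of [] w (i + k * length w)) = ray_of [] w"
  by (rule ext) (simp add: ray_of_def)

lemma ray_drop: "(\<lambda>i. ray_of v w (i + length v)) = ray_of [] w"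
  by (rule ext) (simp add: ray_of_def)

lemma ray_prefix: "prefix_ray (ray_of v w) (length v) = v"
  by (rule nth_equalityI) (simp_all add: prefix_ray_def ray_of_def)

lemma cinner_cont: "continuous_on X (\<lambda>z. norm (cinner (fst z) (snd z)))"
  unfolding cinner_def by (intro continuous_intros)

lemma closed_follows: "closed {x. follows A B q x}"
proof -
  have "{x. follows A B q x} = (\<Inter>n\<in>UNIV. {x. norm (word_act A B (prefix_ray q n) x) = norm x})"
    by (auto simp: follows_def)
  moreover have "closed {x. norm (word_act A B (prefix_ray q n) x) = norm x}" for n
    by (intro closed_Collect_eq continuous_on_norm word_act_cont continuous_on_id)
  ultimately show ?thesis by auto
qed


lemma key_irred:
  fixes A B :: "'n::finite cop" and \<xi> :: "'n cvec"
  assumes pm: "P_module A B" and w: "w \<noteq> []"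
    and np: "\<And>w'. w' \<noteq> [] \<Longrightarrow> p \<noteq> ray_of [] w'"
    and fx: "follows A B p \<xi>" and xi0: "\<xi> \<noteq> 0"
    and pv: "p = ray_of v w"
    and irr: "irreducible_submodule A B S"
  shows "\<forall>y\<in>S. cinner y \<xi> = 0"
proof -
  define r where "r = ray_of [] w"
  define L where "L = length w"
  have L0: "L > 0" using w by (simp add: L_def)
  define \<eta> where "\<eta> = word_act A B v \<xi>"
  have pref: "prefix_ray p (length v) = v" using pv ray_prefix by simp
  have fe0: "follows A B (\<lambda>i. p (i + length v)) \<eta>"
    using follows_shift[OF pm fx, of "length v"] unfolding pref \<eta>_def .
  have "(\<lambda>i. p (i + length v)) = r" unfolding pv r_def by (rule ray_drop)
  with fe0 have fe: "follows A B r \<eta>" by simp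
  have ne: "norm \<eta> = norm \<xi>" using fx unfolding follows_def \<eta>_def by (metis pref)
  have sub: "submodule A B S" using irr by (simp add: irreducible_submodule_def)
  then have cs: "csubspace S" by (simp add: submodule_def)
  then have clS: "closed S" using csubspace_subspace closed_subspace by blast
  obtain y1 where y1: "y1 \<in> S" "y1 \<noteq> 0"
  proof -
    have "0 \<in> S" using cs by (simp add: csubspace_def)
    moreover have "S \<noteq> {0}" using irr by (simp add: irreducible_submodule_def)
    ultimately show ?thesis using that by blast
  qed
  have Ssc: "c *\<^sub>R y \<in> S" if "y \<in> S" for c y
    using cs that by (simp add: csubspace_def scaleR_vec_eq)
  define G where "G = {x. follows A B r x}"
  define K where "K = (S \<inter> sphere 0 1) \<times> (G \<inter> sphere 0 1)"
  have cK: "compact K" unfolding K_def G_def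
    by (intro compact_Times closed_Int_compact clS closed_follows compact_sphere)
  have "((1 / norm y1) *\<^sub>R y1, (1 / norm \<eta>) *\<^sub>R \<eta>) \<in> K"
    using y1 xi0 ne fe Ssc[OF y1(1)] follows_scaleR[OF fe] by (simp add: K_def G_def)
  then have Kne: "K \<noteq> {}" by blast
  obtain z0 where z0: "z0 \<in> K" and zmax: "\<And>z. z \<in> K \<Longrightarrow> norm (cinner (fst z) (snd z)) \<le> norm (cinner (fst z0) (snd z0))"
    using continuous_attains_sup[OF cK Kne cinner_cont] by blast
  define y0 where "y0 = fst z0"
  define x0 where "x0 = snd z0"
  define \<mu> where "\<mu> = norm (cinner y0 x0)"
  have y0: "y0 \<in> S" "norm y0 = 1" and x0: "follows A B r x0" "norm x0 = 1"
    using z0 by (auto simp: K_def G_def y0_def x0_def)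
  have bnd: "norm (cinner y x) \<le> \<mu> * norm y * norm x" if y: "y \<in> S" and x: "follows A B r x" for y x
  proof (cases "y = 0 \<or> x = 0")
    case True then show ?thesis by auto
  next
    case False
    then have ny: "norm y > 0" and nx: "norm x > 0" by auto
    have "((1 / norm y) *\<^sub>R y, (1 / norm x) *\<^sub>R x) \<in> K"
      using False Ssc[OF y] follows_scaleR[OF x] by (simp add: K_def G_def)
    from zmax[OF this] have "norm (cinner ((1 / norm y) *\<^sub>R y) ((1 / norm x) *\<^sub>R x)) \<le> \<mu>"
      by (simp add: \<mu>_def y0_def x0_def)
    then have "norm (cinner y x) / (norm y * norm x) \<le> \<mu>"
      using ny nx by (simp add: cinner_scaleR_left cinner_scaleR_right norm_mult norm_divide mult.commute)
    then have "norm (cinner y x) \<le> \<mu> * (norm y * norm x)" using ny nx by (simp add: divide_le_eq)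
    then show ?thesis by (simp add: mult.assoc)
  qed
  show ?thesis
  proof (cases "\<mu> = 0")
    case True
    show ?thesis
    proof
      fix y assume y: "y \<in> S"
      have "cinner y \<xi> = cinner (word_act A B v y) \<eta>"
        using follows_inner[OF pm fx, of y "length v"] pref by (simp add: \<eta>_def)
      moreover have "norm (cinner (word_act A B v y) \<eta>) \<le> 0"
        using bnd[OF submodule_word[OF sub y] fe] True by simp
      ultimately show "cinner y \<xi> = 0" by simp
    qed
  next
    case False
    then have mpos: "\<mu> > 0" by (simp add: \<mu>_def)
    have big: "norm (word_act A B (prefix_ray r (k * L)) y0) \<ge> 1" for k
    proof -
      define yk where "yk = word_act A B (prefix_ray r (k * L)) y0"
      define xk where "xk = word_act A B (prefix_ray r (k * L)) x0"
      have fxk: "follows A B r xk"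
        using follows_shift[OF pm x0(1), of "k * L"] unfolding xk_def r_def L_def ray_period .
      have nxk: "norm xk = 1" using x0 by (simp add: follows_def xk_def)
      have "cinner y0 x0 = cinner yk xk"
        using follows_inner[OF pm x0(1)] by (simp add: yk_def xk_def)
      then have "\<mu> \<le> \<mu> * norm yk"
        using bnd[OF submodule_word[OF sub y0(1)] fxk] nxk by (simp add: \<mu>_def yk_def)
      then show ?thesis using mpos by (simp add: yk_def)
    qed
    have fy0: "follows A B r y0"
      unfolding follows_def
    proof
      fix n
      have "n \<le> n * L" using L0 by simp
      then obtain d where d: "n * L = n + d" using le_Suc_ex by blast
      have "1 \<le> norm (word_act A B (prefix_ray r (n * L)) y0)" by (rule big)
      also have "\<dots> = norm (word_act A B (prefix_ray (\<lambda>i. r (i + n)) d) (word_act A B (prefix_ray r n) y0))"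
        by (simp add: d prefix_ray_add word_act_append)
      also have "\<dots> \<le> norm (word_act A B (prefix_ray r n) y0)" by (rule word_act_contr[OF pm])
      finally have "1 \<le> norm (word_act A B (prefix_ray r n) y0)" .
      moreover have "norm (word_act A B (prefix_ray r n) y0) \<le> 1"
        using word_act_contr[OF pm] y0(2) by metis
      ultimately show "norm (word_act A B (prefix_ray r n) y0) = norm y0" using y0(2) by simp
    qed
    define N where "N = {y \<in> S. \<forall>u. cinner (word_act A B u y) \<xi> = 0}"
    have subN: "submodule A B N"
      unfolding submodule_def csubspace_def
    proof (intro conjI ballI allI)
      show "0 \<in> N" using cs by (simp add: N_def csubspace_def)
    next
      fix x y assume "x \<in> N" "y \<in> N"
      then show "x + y \<in> N" using cs
        by (simp add: N_def csubspace_def word_act_add cinner_add_left)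
    next
      fix c x assume "x \<in> N"
      then show "c *s x \<in> N" using cs
        by (simp add: N_def csubspace_def word_act_scale cinner_scale_left)
    next
      fix x assume x: "x \<in> N"
      have "A *v x \<in> S" using x sub by (simp add: N_def submodule_def)
      moreover have "cinner (word_act A B u (A *v x)) \<xi> = 0" for u
      proof -
        have "cinner (word_act A B (False # u) x) \<xi> = 0" using x by (simp add: N_def del: word_act_Cons)
        then show ?thesis by simp
      qed
      ultimately show "A *v x \<in> N" by (simp add: N_def)
    next
      fix x assume x: "x \<in> N"
      have "B *v x \<in> S" using x sub by (simp add: N_def submodule_def)
      moreover have "cinner (word_act A B u (B *v x)) \<xi> = 0" for u
      proof -
        have "cinner (word_act A B (True # u) x) \<xi> = 0" using x by (simp add: N_def del: word_act_Cons)
        then show ?thesis by simp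
      qed
      ultimately show "B *v x \<in> N" by (simp add: N_def)
    qed
    have y0N: "y0 \<in> N"
    proof -
      have "cinner (word_act A B u y0) \<xi> = 0" for u
      proof (cases "word_act A B u y0 = 0")
        case True then show ?thesis by simp
      next
        case False
        then have f: "follows A B (\<lambda>i. r (i + length u)) (word_act A B u y0)"
          using follows_word[OF pm fy0, of u] by blast
        have "(\<lambda>i. r (i + length u)) = ray_of [] (rotate (length u) w)"
          unfolding r_def by (rule ray_rotate[OF w])
        moreover have "rotate (length u) w \<noteq> []" using w by simp
        ultimately have "(\<lambda>i. r (i + length u)) \<noteq> p" using np by metis
        then show ?thesis by (rule follows_orth[OF pm _ f fx])
      qed
      then show ?thesis using y0 by (simp add: N_def)
    qed
    have "N \<subseteq> S" by (auto simp: N_def)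
    moreover have "N \<noteq> {0}" using y0N y0(2) by auto
    ultimately have "N = S" using irr subN unfolding irreducible_submodule_def by blast
    show ?thesis
    proof
      fix y assume "y \<in> S"
      then have "y \<in> N" using \<open>N = S\<close> by simp
      then have "cinner (word_act A B [] y) \<xi> = 0" unfolding N_def by blast
      then show "cinner y \<xi> = 0" by simp
    qed
  qed
qed


theorem lemma2p11:
  fixes A B :: "'n::finite cop" and \<xi> :: "'n cvec" and p :: "nat \<Rightarrow> bool"
  assumes "P_module A B"
    and "eventually_periodic p"
    and "\<not> periodic p"
    and "contained_in A B \<xi> p"
  shows "\<xi> \<in> Hres A B"
proof -
  obtain v w where w: "w \<noteq> []" and pv: "p = ray_of v w"
    using assms(2) unfolding eventually_periodic_def by blast
  have np: "p \<noteq> ray_of [] w'" if "w' \<noteq> []" for w'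
    using assms(3) that unfolding periodic_def by blast
  have xi0: "\<xi> \<noteq> 0" and fx: "follows A B p \<xi>"
    using assms(4) by (simp_all add: contained_in_def follows_def)
  define T where "T = {y. cinner y \<xi> = 0}"
  have csT: "csubspace T"
    unfolding csubspace_def T_def by (simp add: cinner_add_left cinner_scale_left)
  have "\<Union>{S. irreducible_submodule A B S} \<subseteq> T"
  proof
    fix y assume "y \<in> \<Union>{S. irreducible_submodule A B S}"
    then obtain S where S: "irreducible_submodule A B S" "y \<in> S" by blast
    show "y \<in> T" using key_irred[OF assms(1) w np fx xi0 pv S(1)] S(2) by (simp add: T_def)
  qed
  then have "Hcomp A B \<subseteq> T" using csT unfolding Hcomp_def by blast
  then show ?thesis unfolding Hres_def T_def by blast
qed

end
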